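(* Fix a node $p$ with $N_p\ge1$ neighbors, integers $d\ge1$, $B_p\ge1$, constants $C^R>0$, $\rho>0$, $\eta>0$, a privacy parameter $\alpha>0$, and fixed vectors $\lambda\in\mathbb{R}^d$ and $a_i\in\mathbb{R}^d$ for $i\in\mathcal{N}_p$ (not depending on the dataset; in the algorithm $a_i=\frac12(f_p(t)+V_i(t)-\epsilon_p(t))$). For a dataset $D_p=((x_j,y_j))_{j=1}^{B_p}$ let $$g(D_p)=\arg\min_{f\in\mathbb{R}^d}\ \frac{C^R}{B_p}\sum_{j=1}^{B_p}\mathcal{L}(y_jf^Tx_j)+\rho R(f)+2\lambda^Tf+\eta\sum_{i\in\mathcal{N}_p}\|f-a_i\|^2,$$ and release $V=g(D_p)+\epsilon$, where $\epsilon\in\mathbb{R}^d$ is drawn independently with density proportional to $e^{-\zeta\|\epsilon\|}$, $\zeta=\frac{\rho B_p\alpha}{2C^R}$. Then for any two neighboring datasets $D_p,D_p'$, the densities $Q(\cdot\mid D_p)$, $Q(\cdot\mid D'_p)$ of $V$ satisfy $\frac{Q(v\mid D_p)}{Q(v\mid D_p')}\le e^{\alpha}$ for all $v\in\mathbb{R}^d$.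
   Context: Data points satisfy $x_j\in\mathbb{R}^d$ with $\|x_j\|\le 1$ (Euclidean norm) and $y_j\in\{-1,1\}$. The loss $\mathcal{L}:\mathbb{R}\to\mathbb{R}$ is convex and differentiable with $|\mathcal{L}'|\le1$. The regularizer $R:\mathbb{R}^d\to\mathbb{R}$ is continuously differentiable and 1-strongly convex. Two datasets of the same size $B_p$ are neighboring if they differ in exactly one data point. *)

theory Defs
  imports "HOL-Analysis.Analysis"
begin

definition strongly_convex_with :: "real \<Rightarrow> ('a::real_normed_vector \<Rightarrow> real) \<Rightarrow> bool" where
  "strongly_convex_with m R \<longleftrightarrow>
     (\<forall>x y t. 0 \<le> t \<and> t \<le> 1 \<longrightarrow>
        R (t *\<^sub>R x + (1 - t) *\<^sub>R y) \<le> t * R x + (1 - t) * R y - m / 2 * t * (1 - t) * (norm (x - y))\<^sup>2)"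

definition objective ::
  "real \<Rightarrow> real \<Rightarrow> real \<Rightarrow> (real \<Rightarrow> real) \<Rightarrow> ('a::euclidean_space \<Rightarrow> real) \<Rightarrow> 'a \<Rightarrow> 'b set \<Rightarrow> ('b \<Rightarrow> 'a)
    \<Rightarrow> nat \<Rightarrow> (nat \<Rightarrow> 'a) \<Rightarrow> (nat \<Rightarrow> real) \<Rightarrow> 'a \<Rightarrow> real" where
  "objective CR \<rho> \<eta> L R lam Np a B x y f =
     CR / real B * (\<Sum>j<B. L (y j * (f \<bullet> x j))) + \<rho> * R f + 2 * (lam \<bullet> f)
     + \<eta> * (\<Sum>i\<in>Np. (norm (f - a i))\<^sup>2)"

definition g_min ::
  "real \<Rightarrow> real \<Rightarrow> real \<Rightarrow> (real \<Rightarrow> real) \<Rightarrow> ('a::euclidean_space \<Rightarrow> real) \<Rightarrow> 'a \<Rightarrow> 'b set \<Rightarrow> ('b \<Rightarrow> 'a)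
    \<Rightarrow> nat \<Rightarrow> (nat \<Rightarrow> 'a) \<Rightarrow> (nat \<Rightarrow> real) \<Rightarrow> 'a" where
  "g_min CR \<rho> \<eta> L R lam Np a B x y =
     (THE f. \<forall>f'. objective CR \<rho> \<eta> L R lam Np a B x y f \<le> objective CR \<rho> \<eta> L R lam Np a B x y f')"

definition noise_density :: "real \<Rightarrow> 'a::euclidean_space \<Rightarrow> real" where
  "noise_density \<zeta> e =
     exp (- \<zeta> * norm e) / (\<integral>u. exp (- \<zeta> * norm (u::'a)) \<partial>lborel)"

definition release_density ::
  "real \<Rightarrow> real \<Rightarrow> real \<Rightarrow> real \<Rightarrow> (real \<Rightarrow> real) \<Rightarrow> ('a::euclidean_space \<Rightarrow> real) \<Rightarrow> 'a \<Rightarrow> 'b set \<Rightarrow> ('b \<Rightarrow> 'a)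
    \<Rightarrow> nat \<Rightarrow> (nat \<Rightarrow> 'a) \<Rightarrow> (nat \<Rightarrow> real) \<Rightarrow> 'a \<Rightarrow> real" where
  "release_density \<zeta> CR \<rho> \<eta> L R lam Np a B x y v =
     noise_density \<zeta> (v - g_min CR \<rho> \<eta> L R lam Np a B x y)"

definition neighboring :: "nat \<Rightarrow> (nat \<Rightarrow> 'a) \<Rightarrow> (nat \<Rightarrow> real) \<Rightarrow> (nat \<Rightarrow> 'a) \<Rightarrow> (nat \<Rightarrow> real) \<Rightarrow> bool" where
  "neighboring B x y x' y' \<longleftrightarrow>
     (\<exists>k<B. (x k, y k) \<noteq> (x' k, y' k) \<and> (\<forall>j<B. j \<noteq> k \<longrightarrow> x j = x' j \<and> y j = y' j))"

definition valid_dataset :: "nat \<Rightarrow> (nat \<Rightarrow> 'a::real_normed_vector) \<Rightarrow> (nat \<Rightarrow> real) \<Rightarrow> bool" where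
  "valid_dataset B x y \<longleftrightarrow> (\<forall>j<B. norm (x j) \<le> 1 \<and> (y j = -1 \<or> y j = 1))"

end

theory Submission imports Defs begin

definition sc :: "real \<Rightarrow> ('a::real_normed_vector \<Rightarrow> real) \<Rightarrow> bool" where
  "sc m J \<longleftrightarrow> (\<forall>x y t. 0 \<le> t \<and> t \<le> 1 \<longrightarrow>
        J (t *\<^sub>R x + (1 - t) *\<^sub>R y) \<le> t * J x + (1 - t) * J y - m / 2 * t * (1 - t) * (norm (x - y))\<^sup>2)"

lemma sc_min:
  assumes m: "m > 0" and s: "sc m J" and mn: "\<forall>f. J g \<le> J f"
  shows "J g + m/2 * (norm (f - g))\<^sup>2 \<le> J f"
proof (rule ccontr)
  assume "\<not> ?thesis"
  hence lt: "J f - J g < m/2 * (norm (f - g))\<^sup>2" by simp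
  define d where "d = (norm (f - g))\<^sup>2"
  define \<delta> where "\<delta> = J f - J g"
  have d0: "\<delta> \<ge> 0" using mn \<delta>_def by auto
  have "\<delta> < m/2*d" using lt d_def \<delta>_def by simp
  hence dpos: "m/2*d > 0" using d0 by linarith
  define s where "s = (1 + \<delta> / (m/2*d)) / 2"
  have s1: "s < 1" using lt dpos unfolding s_def \<delta>_def d_def by (simp add: field_simps)
  have s2: "s \<ge> 1/2" using d0 dpos unfolding s_def by (simp add: field_simps)
  define t where "t = 1 - s"
  have t0: "0 < t" "t \<le> 1" using s1 s2 t_def by auto
  have "J g \<le> J (t *\<^sub>R f + (1 - t) *\<^sub>R g)" using mn by auto
  also have "\<dots> \<le> t * J f + (1 - t) * J g - m / 2 * t * (1 - t) * d"
    using s t0 unfolding sc_def d_def by auto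
  finally have "t * (m/2 * (1-t) * d) \<le> t * \<delta>" unfolding \<delta>_def by (simp add: algebra_simps)
  hence "m/2*(1-t)*d \<le> \<delta>" using t0 by (simp add: mult_le_cancel_left_pos)
  moreover have "m/2*(1-t)*d = (m/2*d + \<delta>)/2" proof -
    have "d \<noteq> 0" using dpos by auto
    thus ?thesis unfolding t_def s_def using m by (simp add: field_simps)
  qed
  ultimately have "(m/2*d + \<delta>)/2 \<le> \<delta>" by simp
  thus False using \<open>\<delta> < m/2*d\<close> by simp
qed

lemma sc_sens:
  assumes m: "m > 0" and s1: "sc m J1" and s2: "sc m J2"
    and mn1: "\<forall>f. J1 g1 \<le> J1 f" and mn2: "\<forall>f. J2 g2 \<le> J2 f"
    and K0: "K \<ge> 0" and K: "\<And>u w. (J1 u - J2 u) - (J1 w - J2 w) \<le> K * norm (u - w)"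
  shows "norm (g1 - g2) \<le> K / m"
proof -
  have a: "J1 g1 + m/2 * (norm (g2 - g1))\<^sup>2 \<le> J1 g2" by (rule sc_min[OF m s1 mn1])
  have b: "J2 g2 + m/2 * (norm (g1 - g2))\<^sup>2 \<le> J2 g1" by (rule sc_min[OF m s2 mn2])
  have c: "(J1 g2 - J2 g2) - (J1 g1 - J2 g1) \<le> K * norm (g2 - g1)" by (rule K)
  have e: "norm (g2 - g1) = norm (g1 - g2)" by (simp add: norm_minus_commute)
  have hh: "m * (norm (g1 - g2))\<^sup>2 = m/2 * (norm (g1 - g2))\<^sup>2 + m/2 * (norm (g1 - g2))\<^sup>2" by simp
  have "m * (norm (g1 - g2))\<^sup>2 \<le> K * norm (g1 - g2)" using a b c unfolding e hh by linarith
  show ?thesis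
  proof (cases "norm (g1 - g2) = 0")
    case True
    then show ?thesis using True m K0 by simp
  next
    case False
    hence p: "norm (g1 - g2) > 0" by simp
    have "m * norm (g1 - g2) \<le> K" using \<open>m * _ \<le> _\<close> p
      by (simp add: power2_eq_square mult.assoc[symmetric] mult_le_cancel_right_pos)
    thus ?thesis using m by (simp add: field_simps)
  qed
qed
lemma sc_exists:
  fixes J :: "'a::euclidean_space \<Rightarrow> real"
  assumes m: "m > 0" and s: "sc m J" and c: "continuous_on UNIV J"
    and r: "\<And>f. norm f \<ge> r \<Longrightarrow> J 0 < J f"
  shows "\<forall>f'. J (THE f. \<forall>f'. J f \<le> J f') \<le> J f'"
proof -
  have "continuous_on (cball 0 \<bar>r\<bar>) J" using c by (rule continuous_on_subset) auto
  then obtain g where g: "g \<in> cball 0 \<bar>r\<bar>" "\<forall>y\<in>cball 0 \<bar>r\<bar>. J g \<le> J y"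
    using continuous_attains_inf[of "cball 0 \<bar>r\<bar>" J] by auto
  have gmin: "\<forall>f'. J g \<le> J f'"
  proof
    fix f'
    show "J g \<le> J f'"
    proof (cases "norm f' \<le> \<bar>r\<bar>")
      case True thus ?thesis using g by auto
    next
      case False
      hence "J 0 < J f'" using r by auto
      moreover have "J g \<le> J 0" using g by auto
      ultimately show ?thesis by simp
    qed
  qed
  have "\<exists>!f. \<forall>f'. J f \<le> J f'"
  proof (rule ex1I[of _ g])
    show "\<forall>f'. J g \<le> J f'" by (rule gmin)
  next
    fix h assume h: "\<forall>f'. J h \<le> J f'"
    have "J h + m/2 * (norm (g - h))\<^sup>2 \<le> J g" by (rule sc_min[OF m s h])
    moreover have "J g \<le> J h" using gmin by auto
    ultimately have "m/2 * (norm (g - h))\<^sup>2 \<le> 0" by simp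
    hence "(norm (g - h))\<^sup>2 \<le> 0" using m by (simp add: mult_le_0_iff)
    thus "h = g" by simp
  qed
  thus ?thesis by (rule theI')
qed


lemma L_lip:
  fixes L :: "real \<Rightarrow> real"
  assumes L_diff: "\<And>t. L differentiable (at t)"
    and L_deriv_bound: "\<And>t. \<bar>deriv L t\<bar> \<le> 1"
  shows "\<bar>L s - L t\<bar> \<le> \<bar>s - t\<bar>"
proof -
  have "norm (L s - L t) \<le> 1 * norm (s - t)"
    apply (rule field_differentiable_bound[of UNIV L "deriv L"])
    using L_diff L_deriv_bound
    by (auto simp: DERIV_deriv_iff_real_differentiable)
  thus ?thesis by simp
qed

lemma R_lower:
  fixes R :: "'a::euclidean_space \<Rightarrow> real" and R' :: "'a \<Rightarrow> 'a \<Rightarrow>\<^sub>L real"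
  assumes R_deriv: "\<And>z. (R has_derivative blinfun_apply (R' z)) (at z)"
    and R_sc: "strongly_convex_with 1 R"
  shows "R 0 - norm (R' 0) * norm f \<le> R f"
proof -
  define \<phi> where "\<phi> = (\<lambda>t::real. R (t *\<^sub>R f))"
  have cv: "convex_on UNIV \<phi>"
    unfolding convex_on_def
  proof (intro conjI ballI allI impI)
    fix p q u v :: real assume uv: "0 \<le> u" "0 \<le> v" "u + v = 1"
    have "R (u *\<^sub>R (p *\<^sub>R f) + (1 - u) *\<^sub>R (q *\<^sub>R f)) \<le> u * R (p *\<^sub>R f) + (1 - u) * R (q *\<^sub>R f)
          - 1 / 2 * u * (1 - u) * (norm (p *\<^sub>R f - q *\<^sub>R f))\<^sup>2"
      using R_sc[unfolded strongly_convex_with_def, rule_format, of u "p *\<^sub>R f" "q *\<^sub>R f"] uv by simp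
    moreover have "0 \<le> 1 / 2 * u * (1 - u) * (norm (p *\<^sub>R f - q *\<^sub>R f))\<^sup>2"
      using uv by auto
    moreover have "v = 1 - u" using uv by simp
    ultimately show "\<phi> (u *\<^sub>R p + v *\<^sub>R q) \<le> u * \<phi> p + v * \<phi> q"
      unfolding \<phi>_def by (simp add: scaleR_add_left scaleR_scaleR)
  qed simp
  have "((\<lambda>t. R (t *\<^sub>R f)) has_derivative (\<lambda>h. blinfun_apply (R' 0) (h *\<^sub>R f))) (at 0)"
    using has_derivative_compose[of "\<lambda>t::real. t *\<^sub>R f" "\<lambda>h. h *\<^sub>R f" 0 UNIV R "blinfun_apply (R' 0)"]
      R_deriv[of 0] by (simp add: has_derivative_scaleR_left[OF has_derivative_ident])
  hence d: "(\<phi> has_field_derivative blinfun_apply (R' 0) f) (at 0 within UNIV)"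
    unfolding \<phi>_def
    by (rule has_derivative_imp_has_field_derivative) (simp add: blinfun.scaleR_right)
  have "\<phi> 1 - \<phi> 0 \<ge> blinfun_apply (R' 0) f * (1 - 0)"
    by (rule convex_on_imp_above_tangent[OF cv]) (use d in auto)
  moreover have "\<bar>blinfun_apply (R' 0) f\<bar> \<le> norm (R' 0) * norm f"
    using norm_blinfun[of "R' 0" f] by simp
  ultimately show ?thesis unfolding \<phi>_def by auto
qed


lemma sq_conv:
  fixes p q :: "'a::real_normed_vector"
  assumes "0 \<le> t" "t \<le> 1"
  shows "(norm (t *\<^sub>R p + (1 - t) *\<^sub>R q))\<^sup>2 \<le> t * (norm p)\<^sup>2 + (1 - t) * (norm q)\<^sup>2"
proof -
  have "norm (t *\<^sub>R p + (1 - t) *\<^sub>R q) \<le> t * norm p + (1 - t) * norm q"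
    using norm_triangle_ineq[of "t *\<^sub>R p" "(1 - t) *\<^sub>R q"] assms by simp
  hence "(norm (t *\<^sub>R p + (1 - t) *\<^sub>R q))\<^sup>2 \<le> (t * norm p + (1 - t) * norm q)\<^sup>2"
    by (rule power_mono) simp
  also have "\<dots> = t * (norm p)\<^sup>2 + (1 - t) * (norm q)\<^sup>2 - t * (1 - t) * (norm p - norm q)\<^sup>2"
    by (simp add: power2_eq_square algebra_simps)
  also have "\<dots> \<le> t * (norm p)\<^sup>2 + (1 - t) * (norm q)\<^sup>2" using assms by simp
  finally show ?thesis .
qed

lemma obj_sc:
  fixes L :: "real \<Rightarrow> real" and R :: "'a::euclidean_space \<Rightarrow> real"
  assumes L_convex: "convex_on UNIV L" and R_sc: "strongly_convex_with 1 R"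
    and CR_pos: "CR > 0" and rho_pos: "\<rho> > 0" and eta_pos: "\<eta> > 0"
  shows "sc \<rho> (objective CR \<rho> \<eta> L R lam Np a B x y)"
  unfolding sc_def
proof (intro allI impI)
  fix p q :: 'a and t :: real assume t: "0 \<le> t \<and> t \<le> 1"
  define z where "z = t *\<^sub>R p + (1 - t) *\<^sub>R q"
  define SL where "SL = (\<lambda>f. \<Sum>j<B. L (y j * (f \<bullet> x j)))"
  define SN where "SN = (\<lambda>f. \<Sum>i\<in>Np. (norm (f - a i))\<^sup>2)"
  define c where "c = CR / real B"
  have c0: "c \<ge> 0" using CR_pos unfolding c_def by simp
  have J: "\<And>f. objective CR \<rho> \<eta> L R lam Np a B x y f = c * SL f + \<rho> * R f + 2 * (lam \<bullet> f) + \<eta> * SN f"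
    unfolding objective_def SL_def SN_def c_def by simp
  have "SL z \<le> (\<Sum>j<B. t * L (y j * (p \<bullet> x j)) + (1 - t) * L (y j * (q \<bullet> x j)))"
    unfolding SL_def
  proof (rule sum_mono)
    fix j
    have "y j * (z \<bullet> x j) = (1 - (1 - t)) *\<^sub>R (y j * (p \<bullet> x j)) + (1 - t) *\<^sub>R (y j * (q \<bullet> x j))"
      unfolding z_def by (simp add: inner_add_left algebra_simps)
    moreover have "L ((1 - (1 - t)) *\<^sub>R (y j * (p \<bullet> x j)) + (1 - t) *\<^sub>R (y j * (q \<bullet> x j)))
        \<le> (1 - (1 - t)) * L (y j * (p \<bullet> x j)) + (1 - t) * L (y j * (q \<bullet> x j))"
      by (rule convex_onD[OF L_convex]) (use t in auto)
    ultimately show "L (y j * (z \<bullet> x j)) \<le> t * L (y j * (p \<bullet> x j)) + (1 - t) * L (y j * (q \<bullet> x j))"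
      by simp
  qed
  also have "\<dots> = t * SL p + (1 - t) * SL q" unfolding SL_def by (simp add: sum.distrib sum_distrib_left)
  finally have "SL z \<le> t * SL p + (1 - t) * SL q" .
  hence "c * SL z \<le> c * (t * SL p + (1 - t) * SL q)" using c0 by (rule mult_left_mono)
  hence sl: "c * SL z \<le> t * (c * SL p) + (1 - t) * (c * SL q)" by (simp add: algebra_simps)
  have "SN z \<le> (\<Sum>i\<in>Np. t * (norm (p - a i))\<^sup>2 + (1 - t) * (norm (q - a i))\<^sup>2)"
    unfolding SN_def
  proof (rule sum_mono)
    fix i
    have "z - a i = t *\<^sub>R (p - a i) + (1 - t) *\<^sub>R (q - a i)"
      unfolding z_def by (simp add: algebra_simps)
    thus "(norm (z - a i))\<^sup>2 \<le> t * (norm (p - a i))\<^sup>2 + (1 - t) * (norm (q - a i))\<^sup>2"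
      using sq_conv[of t "p - a i" "q - a i"] t by simp
  qed
  also have "\<dots> = t * SN p + (1 - t) * SN q" unfolding SN_def by (simp add: sum.distrib sum_distrib_left)
  finally have "SN z \<le> t * SN p + (1 - t) * SN q" .
  hence "\<eta> * SN z \<le> \<eta> * (t * SN p + (1 - t) * SN q)" using eta_pos by (intro mult_left_mono) auto
  hence sn: "\<eta> * SN z \<le> t * (\<eta> * SN p) + (1 - t) * (\<eta> * SN q)" by (simp add: algebra_simps)
  have "R z \<le> t * R p + (1 - t) * R q - 1 / 2 * t * (1 - t) * (norm (p - q))\<^sup>2"
    using R_sc t unfolding strongly_convex_with_def z_def by auto
  hence "\<rho> * R z \<le> \<rho> * (t * R p + (1 - t) * R q - 1 / 2 * t * (1 - t) * (norm (p - q))\<^sup>2)"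
    using rho_pos by (intro mult_left_mono) auto
  hence rr: "\<rho> * R z \<le> t * (\<rho> * R p) + (1 - t) * (\<rho> * R q) - \<rho> / 2 * t * (1 - t) * (norm (p - q))\<^sup>2"
    by (simp add: algebra_simps)
  have ll: "2 * (lam \<bullet> z) = t * (2 * (lam \<bullet> p)) + (1 - t) * (2 * (lam \<bullet> q))"
    unfolding z_def by (simp add: inner_add_right algebra_simps)
  have e1: "t * objective CR \<rho> \<eta> L R lam Np a B x y p = t * (c * SL p) + t * (\<rho> * R p) + t * (2 * (lam \<bullet> p)) + t * (\<eta> * SN p)"
    unfolding J by (simp add: algebra_simps)
  have e2: "(1 - t) * objective CR \<rho> \<eta> L R lam Np a B x y q = (1 - t) * (c * SL q) + (1 - t) * (\<rho> * R q) + (1 - t) * (2 * (lam \<bullet> q)) + (1 - t) * (\<eta> * SN q)"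
    unfolding J by (simp add: algebra_simps)
  show "objective CR \<rho> \<eta> L R lam Np a B x y (t *\<^sub>R p + (1 - t) *\<^sub>R q)
        \<le> t * objective CR \<rho> \<eta> L R lam Np a B x y p + (1 - t) * objective CR \<rho> \<eta> L R lam Np a B x y q -
           \<rho> / 2 * t * (1 - t) * (norm (p - q))\<^sup>2"
    unfolding z_def[symmetric] e1 e2 J[of z] using sl sn rr ll by linarith
qed


lemma coercive_gen:
  fixes J :: "'a::real_normed_vector \<Rightarrow> real"
  assumes eta: "\<eta> > 0" and K: "K \<ge> 0"
    and lb: "\<And>f. \<eta> * (norm (f - c))\<^sup>2 - K * norm f + D \<le> J f"
  shows "\<exists>r. \<forall>f. norm f \<ge> r \<longrightarrow> J 0 < J f"
proof -
  define A where "A = norm c"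
  define M where "M = K + \<bar>J 0\<bar> + \<bar>D\<bar> + K * A + 1"
  define r where "r = A + max 1 (M / \<eta>)"
  have A0: "A \<ge> 0" unfolding A_def by simp
  have M1: "M \<ge> 1" unfolding M_def using K A0 by simp
  show ?thesis
  proof (intro exI allI impI)
    fix f :: 'a assume nf: "r \<le> norm f"
    define s where "s = norm f - A"
    have s1: "s \<ge> 1" and sM: "s \<ge> M / \<eta>" using nf unfolding r_def s_def by auto
    have "norm (f - c) \<ge> s" unfolding s_def A_def using norm_triangle_ineq2[of f c] by simp
    hence "(norm (f - c))\<^sup>2 \<ge> s\<^sup>2" using s1 by (intro power_mono) auto
    hence "\<eta> * (norm (f - c))\<^sup>2 \<ge> \<eta> * s\<^sup>2" using eta by simp
    moreover have "\<eta> * s \<ge> M" using sM eta by (simp add: field_simps)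
    hence "\<eta> * s * s \<ge> M * s" using s1 by (intro mult_right_mono) auto
    hence "\<eta> * s\<^sup>2 \<ge> M * s" by (simp add: power2_eq_square mult.assoc)
    moreover have "M * s = K * s + (\<bar>J 0\<bar> + \<bar>D\<bar> + K * A + 1) * s" unfolding M_def by (simp add: algebra_simps)
    moreover have "(\<bar>J 0\<bar> + \<bar>D\<bar> + K * A + 1) * s \<ge> (\<bar>J 0\<bar> + \<bar>D\<bar> + K * A + 1)"
    proof -
      have X0: "\<bar>J 0\<bar> + \<bar>D\<bar> + K * A + 1 \<ge> 0" using K A0 by simp
      show ?thesis using mult_left_mono[OF s1 X0] by simp
    qed
    moreover have "K * norm f = K * s + K * A" unfolding s_def by (simp add: algebra_simps)
    moreover have "J f \<ge> \<eta> * (norm (f - c))\<^sup>2 - K * norm f + D" by (rule lb)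
    ultimately show "J 0 < J f" by linarith
  qed
qed

lemma obj_lb:
  fixes L :: "real \<Rightarrow> real" and R :: "'a::euclidean_space \<Rightarrow> real"
    and R' :: "'a \<Rightarrow> 'a \<Rightarrow>\<^sub>L real"
  assumes L_diff: "\<And>t. L differentiable (at t)"
    and L_deriv_bound: "\<And>t. \<bar>deriv L t\<bar> \<le> 1"
    and R_deriv: "\<And>z. (R has_derivative blinfun_apply (R' z)) (at z)"
    and R_sc: "strongly_convex_with 1 R"
    and Np_fin: "finite Np" and i0: "i0 \<in> Np"
    and B_pos: "B \<ge> 1"
    and CR_pos: "CR > 0" and rho_pos: "\<rho> > 0" and eta_pos: "\<eta> > 0"
    and D_valid: "valid_dataset B x y"
  shows "\<eta> * (norm (f - a i0))\<^sup>2 - (CR + \<rho> * norm (R' 0) + 2 * norm lam) * norm f + (CR * L 0 + \<rho> * R 0)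
         \<le> objective CR \<rho> \<eta> L R lam Np a B x y f"
proof -
  have "(\<Sum>j<B. L 0 - norm f) \<le> (\<Sum>j<B. L (y j * (f \<bullet> x j)))"
  proof (rule sum_mono)
    fix j assume j: "j \<in> {..<B}"
    have "\<bar>y j\<bar> = 1" "norm (x j) \<le> 1" using D_valid j unfolding valid_dataset_def by auto
    hence "\<bar>y j * (f \<bullet> x j)\<bar> \<le> norm f"
      using Cauchy_Schwarz_ineq2[of f "x j"] mult_left_mono[of "norm (x j)" 1 "norm f"]
      by (simp add: abs_mult)
    moreover have "\<bar>L (y j * (f \<bullet> x j)) - L 0\<bar> \<le> \<bar>y j * (f \<bullet> x j) - 0\<bar>"
      by (rule L_lip[OF L_diff L_deriv_bound])
    ultimately show "L 0 - norm f \<le> L (y j * (f \<bullet> x j))" by linarith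
  qed
  hence "CR / real B * (real B * (L 0 - norm f)) \<le> CR / real B * (\<Sum>j<B. L (y j * (f \<bullet> x j)))"
    using CR_pos by (intro mult_left_mono) auto
  hence s1: "CR * L 0 - CR * norm f \<le> CR / real B * (\<Sum>j<B. L (y j * (f \<bullet> x j)))"
    using B_pos by (simp add: algebra_simps)
  have "R 0 - norm (R' 0) * norm f \<le> R f" by (rule R_lower[OF R_deriv R_sc])
  hence "\<rho> * (R 0 - norm (R' 0) * norm f) \<le> \<rho> * R f"
    using rho_pos by (intro mult_left_mono) auto
  hence s2: "\<rho> * R 0 - \<rho> * norm (R' 0) * norm f \<le> \<rho> * R f"
    by (simp add: algebra_simps)
  have s3: "- 2 * norm lam * norm f \<le> 2 * (lam \<bullet> f)"
    using Cauchy_Schwarz_ineq2[of lam f] by linarith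
  have "(norm (f - a i0))\<^sup>2 \<le> (\<Sum>i\<in>Np. (norm (f - a i))\<^sup>2)"
    using Np_fin i0 by (intro member_le_sum) auto
  hence s4: "\<eta> * (norm (f - a i0))\<^sup>2 \<le> \<eta> * (\<Sum>i\<in>Np. (norm (f - a i))\<^sup>2)"
    using eta_pos by simp
  show ?thesis unfolding objective_def using s1 s2 s3 s4 by (simp add: algebra_simps)
qed

lemma obj_cont:
  fixes L :: "real \<Rightarrow> real" and R :: "'a::euclidean_space \<Rightarrow> real"
    and R' :: "'a \<Rightarrow> 'a \<Rightarrow>\<^sub>L real"
  assumes L_diff: "\<And>t. L differentiable (at t)"
    and R_deriv: "\<And>z. (R has_derivative blinfun_apply (R' z)) (at z)"
  shows "continuous_on UNIV (objective CR \<rho> \<eta> L R lam Np a B x y)"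
proof -
  have cL: "\<And>t. isCont L t" using L_diff by (simp add: differentiable_imp_continuous_within)
  have cR: "\<And>z. isCont R z" using R_deriv has_derivative_continuous by blast
  have "\<And>f. isCont (objective CR \<rho> \<eta> L R lam Np a B x y) f"
    unfolding objective_def
    by (intro continuous_intros isCont_o2[OF _ cL] isCont_o2[OF _ cR])
  thus ?thesis by (simp add: continuous_at_imp_continuous_on)
qed

lemma obj_min:
  fixes L :: "real \<Rightarrow> real" and R :: "'a::euclidean_space \<Rightarrow> real"
    and R' :: "'a \<Rightarrow> 'a \<Rightarrow>\<^sub>L real"
  assumes L_convex: "convex_on UNIV L"
    and L_diff: "\<And>t. L differentiable (at t)"
    and L_deriv_bound: "\<And>t. \<bar>deriv L t\<bar> \<le> 1"
    and R_deriv: "\<And>z. (R has_derivative blinfun_apply (R' z)) (at z)"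
    and R_sc: "strongly_convex_with 1 R"
    and Np_fin: "finite Np" and i0: "i0 \<in> Np"
    and B_pos: "B \<ge> 1"
    and CR_pos: "CR > 0" and rho_pos: "\<rho> > 0" and eta_pos: "\<eta> > 0"
    and D_valid: "valid_dataset B x y"
  shows "\<forall>f'. objective CR \<rho> \<eta> L R lam Np a B x y (g_min CR \<rho> \<eta> L R lam Np a B x y)
           \<le> objective CR \<rho> \<eta> L R lam Np a B x y f'"
proof -
  have s: "sc \<rho> (objective CR \<rho> \<eta> L R lam Np a B x y)"
    by (rule obj_sc[OF L_convex R_sc CR_pos rho_pos eta_pos])
  have c: "continuous_on UNIV (objective CR \<rho> \<eta> L R lam Np a B x y)"
    by (rule obj_cont[OF L_diff R_deriv])
  have K0: "CR + \<rho> * norm (R' 0) + 2 * norm lam \<ge> 0" using CR_pos rho_pos by simp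
  obtain r where r: "\<forall>f. norm f \<ge> r \<longrightarrow> objective CR \<rho> \<eta> L R lam Np a B x y 0 < objective CR \<rho> \<eta> L R lam Np a B x y f"
    using coercive_gen[OF eta_pos K0 obj_lb[OF L_diff L_deriv_bound R_deriv R_sc Np_fin i0 B_pos CR_pos rho_pos eta_pos D_valid]]
    by blast
  show ?thesis unfolding g_min_def
    by (rule sc_exists[OF rho_pos s c]) (use r in auto)
qed

theorem theorem2:
  fixes L :: "real \<Rightarrow> real" and R :: "'a::euclidean_space \<Rightarrow> real"
    and R' :: "'a \<Rightarrow> 'a \<Rightarrow>\<^sub>L real"
    and lam :: 'a and Np :: "'b set" and a :: "'b \<Rightarrow> 'a"
    and B :: nat and CR \<rho> \<eta> \<alpha> :: real
    and x x' :: "nat \<Rightarrow> 'a" and y y' :: "nat \<Rightarrow> real" and v :: 'a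
  assumes L_convex: "convex_on UNIV L"
    and L_diff: "\<And>t. L differentiable (at t)"
    and L_deriv_bound: "\<And>t. \<bar>deriv L t\<bar> \<le> 1"
    and R_deriv: "\<And>z. (R has_derivative blinfun_apply (R' z)) (at z)"
    and R'_cont: "continuous_on UNIV R'"
    and R_sc: "strongly_convex_with 1 R"
    and Np_fin: "finite Np" and Np_card: "card Np \<ge> 1"
    and B_pos: "B \<ge> 1"
    and CR_pos: "CR > 0" and rho_pos: "\<rho> > 0" and eta_pos: "\<eta> > 0" and alpha_pos: "\<alpha> > 0"
    and D_valid: "valid_dataset B x y"
    and D'_valid: "valid_dataset B x' y'"
    and nb: "neighboring B x y x' y'"
  shows "release_density (\<rho> * real B * \<alpha> / (2 * CR)) CR \<rho> \<eta> L R lam Np a B x y v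
         / release_density (\<rho> * real B * \<alpha> / (2 * CR)) CR \<rho> \<eta> L R lam Np a B x' y' v
         \<le> exp \<alpha>"
proof -
  obtain i0 where i0: "i0 \<in> Np" using Np_card by (metis card.empty ex_in_conv not_one_le_zero)
  define J where "J = objective CR \<rho> \<eta> L R lam Np a B x y"
  define J' where "J' = objective CR \<rho> \<eta> L R lam Np a B x' y'"
  define g where "g = g_min CR \<rho> \<eta> L R lam Np a B x y"
  define g' where "g' = g_min CR \<rho> \<eta> L R lam Np a B x' y'"
  have m1: "\<forall>f. J g \<le> J f" unfolding J_def g_def
    by (rule obj_min[OF L_convex L_diff L_deriv_bound R_deriv R_sc Np_fin i0 B_pos CR_pos rho_pos eta_pos D_valid])
  have m2: "\<forall>f. J' g' \<le> J' f" unfolding J'_def g'_def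
    by (rule obj_min[OF L_convex L_diff L_deriv_bound R_deriv R_sc Np_fin i0 B_pos CR_pos rho_pos eta_pos D'_valid])
  have s1: "sc \<rho> J" unfolding J_def by (rule obj_sc[OF L_convex R_sc CR_pos rho_pos eta_pos])
  have s2: "sc \<rho> J'" unfolding J'_def by (rule obj_sc[OF L_convex R_sc CR_pos rho_pos eta_pos])
  obtain k where k: "k < B" and oth: "\<And>j. j < B \<Longrightarrow> j \<noteq> k \<Longrightarrow> x j = x' j \<and> y j = y' j"
    using nb unfolding neighboring_def by blast
  define h where "h = (\<lambda>u j. L (y j * (u \<bullet> x j)) - L (y' j * (u \<bullet> x' j)))"
  have hsum: "\<And>u. (\<Sum>j<B. h u j) = h u k"
  proof -
    fix u
    have "(\<Sum>j<B. h u j) = h u k + (\<Sum>j\<in>{..<B} - {k}. h u j)"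
      using k by (simp add: sum.remove)
    also have "(\<Sum>j\<in>{..<B} - {k}. h u j) = 0"
      by (rule sum.neutral) (use oth in \<open>auto simp: h_def\<close>)
    finally show "(\<Sum>j<B. h u j) = h u k" by simp
  qed
  have diff: "\<And>u. J u - J' u = CR / real B * h u k"
  proof -
    fix u
    have "J u - J' u = CR / real B * ((\<Sum>j<B. L (y j * (u \<bullet> x j))) - (\<Sum>j<B. L (y' j * (u \<bullet> x' j))))"
      unfolding J_def J'_def objective_def by (simp add: algebra_simps)
    also have "(\<Sum>j<B. L (y j * (u \<bullet> x j))) - (\<Sum>j<B. L (y' j * (u \<bullet> x' j))) = (\<Sum>j<B. h u j)"
      unfolding h_def by (simp add: sum_subtractf)
    finally show "J u - J' u = CR / real B * h u k" using hsum by simp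
  qed
  have one: "\<And>yy xx u w. \<bar>yy\<bar> = 1 \<Longrightarrow> norm (xx::'a) \<le> 1 \<Longrightarrow>
      \<bar>L (yy * (u \<bullet> xx)) - L (yy * (w \<bullet> xx))\<bar> \<le> norm (u - w)"
  proof -
    fix yy xx u w assume a1: "\<bar>yy\<bar> = (1::real)" and a2: "norm (xx::'a) \<le> 1"
    have "\<bar>L (yy * (u \<bullet> xx)) - L (yy * (w \<bullet> xx))\<bar> \<le> \<bar>yy * (u \<bullet> xx) - yy * (w \<bullet> xx)\<bar>"
      by (rule L_lip[OF L_diff L_deriv_bound])
    also have "\<bar>yy * (u \<bullet> xx) - yy * (w \<bullet> xx)\<bar> = \<bar>(u - w) \<bullet> xx\<bar>"
      using a1 by (simp add: abs_mult inner_diff_left[symmetric] right_diff_distrib[symmetric])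
    also have "\<dots> \<le> norm (u - w) * norm xx" by (rule Cauchy_Schwarz_ineq2)
    also have "\<dots> \<le> norm (u - w)" using a2 mult_left_mono[of "norm xx" 1 "norm (u - w)"] by simp
    finally show "\<bar>L (yy * (u \<bullet> xx)) - L (yy * (w \<bullet> xx))\<bar> \<le> norm (u - w)" .
  qed
  have vk: "\<bar>y k\<bar> = 1" "norm (x k) \<le> 1" "\<bar>y' k\<bar> = 1" "norm (x' k) \<le> 1"
    using D_valid D'_valid k unfolding valid_dataset_def by auto
  have K: "\<And>u w. (J u - J' u) - (J w - J' w) \<le> 2 * CR / real B * norm (u - w)"
  proof -
    fix u w
    have "\<bar>h u k - h w k\<bar> \<le> 2 * norm (u - w)"
      using one[OF vk(1,2), of u w] one[OF vk(3,4), of u w] unfolding h_def by linarith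
    hence "CR / real B * (h u k - h w k) \<le> CR / real B * (2 * norm (u - w))"
      using CR_pos by (intro mult_left_mono) auto
    thus "(J u - J' u) - (J w - J' w) \<le> 2 * CR / real B * norm (u - w)"
      unfolding diff by (simp add: algebra_simps)
  qed
  have gg: "norm (g - g') \<le> (2 * CR / real B) / \<rho>"
    by (rule sc_sens[OF rho_pos s1 s2 m1 m2 _ K]) (use CR_pos in simp)
  define \<zeta> where "\<zeta> = \<rho> * real B * \<alpha> / (2 * CR)"
  have z0: "\<zeta> \<ge> 0" unfolding \<zeta>_def using rho_pos alpha_pos CR_pos by simp
  have "\<zeta> * norm (g - g') \<le> \<zeta> * ((2 * CR / real B) / \<rho>)" using gg z0 by (rule mult_left_mono)
  also have "\<dots> = \<alpha>" unfolding \<zeta>_def using rho_pos CR_pos B_pos by (simp add: field_simps)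
  finally have za: "\<zeta> * norm (g - g') \<le> \<alpha>" .
  have tri: "norm (v - g') - norm (v - g) \<le> norm (g - g')"
    using norm_triangle_ineq[of "v - g" "g - g'"] by simp
  have ex: "- \<zeta> * norm (v - g) - (- \<zeta> * norm (v - g')) \<le> \<alpha>"
    using mult_left_mono[OF tri z0] za by (simp add: algebra_simps)
  define Z where "Z = (\<integral>u. exp (- \<zeta> * norm (u::'a)) \<partial>lborel)"
  have "release_density \<zeta> CR \<rho> \<eta> L R lam Np a B x y v / release_density \<zeta> CR \<rho> \<eta> L R lam Np a B x' y' v
        = (exp (- \<zeta> * norm (v - g)) / Z) / (exp (- \<zeta> * norm (v - g')) / Z)"
    unfolding release_density_def noise_density_def g_def g'_def Z_def by simp
  also have "\<dots> \<le> exp \<alpha>"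
  proof (cases "Z = 0")
    case True thus ?thesis by simp
  next
    case False
    hence "(exp (- \<zeta> * norm (v - g)) / Z) / (exp (- \<zeta> * norm (v - g')) / Z)
          = exp (- \<zeta> * norm (v - g) - (- \<zeta> * norm (v - g')))"
      by (simp add: exp_diff[symmetric])
    also have "\<dots> \<le> exp \<alpha>" using ex by simp
    finally show ?thesis .
  qed
  finally show ?thesis unfolding \<zeta>_def .
qed

end
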